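(* Let $a,c,b_1,\dots,b_n,d_1,\dots,d_n\in\mathbb R$ and let $\Phi:(\mathbb R\times\mathbb R^n,(0,0))\to(\mathbb R^2\times\mathbb R^n,(0,0))$ be $$\Phi(x,y)=\Big(ax^4+x^2\sum_{i=1}^n b_iy_i,\ cx^3+x\sum_{i=1}^n d_iy_i,\ y\Big),\quad y=(y_1,\dots,y_n).$$ Then $\Phi$ is $\mathcal A$-equivalent to $(x,y)\mapsto(3x^4+x^2y_1,-4x^3-2xy_1,y)$ (i.e. is a (swallowtail)$\times\mathbb R^{n-1}$) if and only if $2ad_i=3b_ic$ for every $i=1,\dots,n$ and there exists $i$ with $ab_icd_i\neq0$.
   Context: $\mathcal A$-equivalence of map-germs: $f=h_t\circ g\circ h_s$ for diffeomorphism germs $h_s,h_t$ of source and target. *)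

theory Defs
  imports "HOL-Analysis.Analysis"
begin

text \<open>C-infinity smoothness on a set U: there is a family of higher derivatives
  D k x [v1,...,vk] (the k-th derivative at x applied to v1..vk) such that D 0 = f on U
  and, for every k and every fixed list of directions of length k, the map
  y \<mapsto> D k y vs is (Frechet) differentiable at every point of U with derivative
  v \<mapsto> D (k+1) x (v # vs).  For finite-dimensional domains this is exactly C-infinity.\<close>
definition smooth_on :: "'a::euclidean_space set \<Rightarrow> ('a \<Rightarrow> 'b::real_normed_vector) \<Rightarrow> bool" where
  "smooth_on U f \<longleftrightarrow>
     (\<exists>D :: nat \<Rightarrow> 'a \<Rightarrow> 'a list \<Rightarrow> 'b.
        (\<forall>x\<in>U. D 0 x [] = f x) \<and>
        (\<forall>k vs x. length vs = k \<and> x \<in> U \<longrightarrow>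
            ((\<lambda>y. D k y vs) has_derivative (\<lambda>v. D (Suc k) x (v # vs))) (at x)))"

definition diffeo_germ :: "('a::euclidean_space \<Rightarrow> 'a) \<Rightarrow> bool" where
  "diffeo_germ h \<longleftrightarrow> h 0 = 0 \<and>
     (\<exists>U V g. open U \<and> open V \<and> 0 \<in> U \<and> h ` U = V \<and>
        smooth_on U h \<and> smooth_on V g \<and>
        (\<forall>x\<in>U. g (h x) = x) \<and> (\<forall>y\<in>V. h (g y) = y))"

definition A_equivalent :: "('a::euclidean_space \<Rightarrow> 'b::euclidean_space) \<Rightarrow> ('a \<Rightarrow> 'b) \<Rightarrow> bool" where
  "A_equivalent f g \<longleftrightarrow>
     (\<exists>hs ht. diffeo_germ hs \<and> diffeo_germ ht \<and>
        (\<forall>\<^sub>F x in nhds 0. f x = ht (g (hs x))))"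

end

theory Submission
  imports Defs
begin


definition Phi :: "real \<Rightarrow> real \<Rightarrow> real^'n \<Rightarrow> real^'n \<Rightarrow> real \<times> (real^'n) \<Rightarrow> real \<times> real \<times> (real^'n)" where
  "Phi a c b d p = (a * fst p ^ 4 + fst p ^ 2 * (b \<bullet> snd p), c * fst p ^ 3 + fst p * (d \<bullet> snd p), snd p)"

definition Phi' :: "real \<Rightarrow> real \<Rightarrow> real^'n \<Rightarrow> real^'n \<Rightarrow> real \<times> (real^'n) \<Rightarrow> real \<times> (real^'n) \<Rightarrow> real \<times> real \<times> (real^'n)" where
  "Phi' a c b d p v = ((4*a*fst p^3 + 2*fst p*(b \<bullet> snd p)) * fst v + fst p^2 * (b \<bullet> snd v),
      (3*c*fst p^2 + d \<bullet> snd p) * fst v + fst p * (d \<bullet> snd v), snd v)"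

lemma Phi_deriv: "(Phi a c b d has_derivative Phi' a c b d p) (at p)"
proof -
  have "((\<lambda>p. Phi a c b d p) has_derivative (\<lambda>v. Phi' a c b d p v)) (at p)"
    unfolding Phi_def Phi'_def
    apply (rule derivative_eq_intros refl | simp)+
    apply (auto simp: algebra_simps inner_commute power2_eq_square power3_eq_cube eval_nat_numeral)
    done
  then show ?thesis by simp
qed



definition singd :: "('a::real_vector \<Rightarrow> 'b::real_vector) \<Rightarrow> bool" where
  "singd L \<longleftrightarrow> (\<exists>v. v \<noteq> 0 \<and> L v = 0)"

lemma smooth_deriv:
  assumes "smooth_on U h" "open U" "x \<in> U"
  shows "\<exists>D. (h has_derivative D) (at x)"
proof -
  obtain D where D0: "\<forall>x\<in>U. D 0 x [] = h x"
    and DS: "\<forall>k vs x. length vs = k \<and> x \<in> U \<longrightarrow>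
            ((\<lambda>y. D k y vs) has_derivative (\<lambda>v. D (Suc k) x (v # vs))) (at x)"
    using assms(1) unfolding smooth_on_def by blast
  have "((\<lambda>y. D 0 y []) has_derivative (\<lambda>v. D (Suc 0) x [v])) (at x)"
    using DS[rule_format, of "[]" 0 x] assms(3) by simp
  then have "(h has_derivative (\<lambda>v. D (Suc 0) x [v])) (at x)"
    by (rule has_derivative_transform_within_open[OF _ assms(2) assms(3)]) (use D0 in auto)
  then show ?thesis by blast
qed

lemma inv_deriv_inj:
  assumes "(h has_derivative Dh) (at x)" "(g has_derivative Dg) (at (h x))"
    "open U" "x \<in> U" "\<forall>x\<in>U. g (h x) = x"
  shows "inj Dh"
proof -
  have "((g \<circ> h) has_derivative (Dg \<circ> Dh)) (at x)"
    using diff_chain_at[OF assms(1) assms(2)] .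
  then have "((\<lambda>x. x) has_derivative (Dg \<circ> Dh)) (at x)"
    by (rule has_derivative_transform_within_open[OF _ assms(3) assms(4)]) (use assms(5) in auto)
  moreover have "((\<lambda>x. x) has_derivative (\<lambda>x. x)) (at x)" by (rule has_derivative_ident)
  ultimately have "Dg \<circ> Dh = (\<lambda>x. x)" by (rule has_derivative_unique)
  show ?thesis
  proof (rule injI)
    fix u w assume "Dh u = Dh w"
    then have "(Dg \<circ> Dh) u = (Dg \<circ> Dh) w" by simp
    then show "u = w" using \<open>Dg \<circ> Dh = (\<lambda>x. x)\<close> by simp
  qed
qed

lemma inj_surj_deriv:
  fixes Dh :: "'a::euclidean_space \<Rightarrow> 'a"
  assumes "(h has_derivative Dh) (at x)" "inj Dh"
  shows "surj Dh"
proof -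
  have "linear Dh" using assms(1) has_derivative_linear by blast
  then show ?thesis using linear_inj_imp_surj[OF _ assms(2)] by simp
qed

lemma diffeo_data:
  assumes "diffeo_germ h"
  obtains U V g where "open U" "open V" "0 \<in> U" "h ` U = V" "h 0 = 0"
    "\<forall>x\<in>U. \<exists>D. (h has_derivative D) (at x)" "\<forall>y\<in>V. \<exists>D. (g has_derivative D) (at y)"
    "\<forall>x\<in>U. g (h x) = x" "\<forall>y\<in>V. h (g y) = y"
proof -
  obtain U V g where *: "open U" "open V" "0 \<in> U" "h ` U = V" "smooth_on U h" "smooth_on V g"
    "\<forall>x\<in>U. g (h x) = x" "\<forall>y\<in>V. h (g y) = y" and h0: "h 0 = 0"
    using assms unfolding diffeo_germ_def by blast
  show ?thesis
  proof (rule that[OF *(1-4) h0 _ _ *(7,8)])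
    show "\<forall>x\<in>U. \<exists>D. (h has_derivative D) (at x)" using smooth_deriv[OF *(5) *(1)] by blast
    show "\<forall>x\<in>V. \<exists>D. (g has_derivative D) (at x)" using smooth_deriv[OF *(6) *(2)] by blast
  qed
qed

lemma transfer:
  fixes f g :: "'a::euclidean_space \<Rightarrow> 'b::euclidean_space"
  assumes AE: "A_equivalent f g" and gc: "continuous_on UNIV g" and g0: "g 0 = 0"
    and fd: "\<And>p. (f has_derivative f' p) (at p)"
    and gd: "\<And>p. (g has_derivative g' p) (at p)"
  obtains N W \<phi> \<psi> M where "open N" "0 \<in> N" "open W" "0 \<in> W" "\<psi> 0 = 0"
    "\<forall>p\<in>N. \<phi> p \<in> W \<and> \<psi> (\<phi> p) = p" "\<forall>z\<in>W. \<psi> z \<in> N \<and> \<phi> (\<psi> z) = z"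
    "continuous_on W \<psi>" "(\<psi> has_derivative M) (at 0)" "linear M" "inj M"
    "\<forall>p\<in>N. \<forall>q\<in>N. f p = f q \<longleftrightarrow> g (\<phi> p) = g (\<phi> q)"
    "\<forall>p\<in>N. singd (f' p) \<longleftrightarrow> singd (g' (\<phi> p))"
proof -
  obtain hs ht where dhs: "diffeo_germ hs" and dht: "diffeo_germ ht"
    and ev: "\<forall>\<^sub>F x in nhds 0. f x = ht (g (hs x))"
    using AE unfolding A_equivalent_def by blast
  obtain Us Vs gs where Us: "open Us" and Vs: "open Vs" and U0: "0 \<in> Us" and img: "hs ` Us = Vs"
    and hs0: "hs 0 = 0"
    and hsd: "\<forall>x\<in>Us. \<exists>D. (hs has_derivative D) (at x)" and gsd: "\<forall>y\<in>Vs. \<exists>D. (gs has_derivative D) (at y)"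
    and gh: "\<forall>x\<in>Us. gs (hs x) = x" and hg: "\<forall>y\<in>Vs. hs (gs y) = y"
    by (rule diffeo_data[OF dhs])
  obtain Ut Vt gt where Ut: "open Ut" and Vt: "open Vt" and Ut0: "0 \<in> Ut" and imgt: "ht ` Ut = Vt"
    and ht0: "ht 0 = 0"
    and htd: "\<forall>x\<in>Ut. \<exists>D. (ht has_derivative D) (at x)" and gtd: "\<forall>y\<in>Vt. \<exists>D. (gt has_derivative D) (at y)"
    and ght: "\<forall>x\<in>Ut. gt (ht x) = x" and hgt: "\<forall>y\<in>Vt. ht (gt y) = y"
    by (rule diffeo_data[OF dht])
  obtain S0 where S0: "open S0" "0 \<in> S0" "\<forall>x\<in>S0. f x = ht (g (hs x))"
    using ev unfolding eventually_nhds by blast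
  have hsc: "continuous_on Us hs"
    by (rule continuous_at_imp_continuous_on) (use hsd has_derivative_continuous in blast)
  have gsc: "continuous_on Vs gs"
    by (rule continuous_at_imp_continuous_on) (use gsd has_derivative_continuous in blast)
  have "continuous_on Us (g \<circ> hs)"
    by (rule continuous_on_compose[OF hsc continuous_on_subset[OF gc subset_UNIV]])
  then have oQ: "open (Us \<inter> (g \<circ> hs) -` Ut)" using continuous_open_preimage Us Ut by blast
  define N where "N = S0 \<inter> (Us \<inter> (g \<circ> hs) -` Ut)"
  have oN: "open N" using oQ S0 N_def by auto
  have N0: "0 \<in> N" using S0 U0 Ut0 hs0 g0 N_def by auto
  define W where "W = Vs \<inter> gs -` N"
  have oW: "open W" using continuous_open_preimage[OF gsc Vs oN] W_def by simp
  have V0: "0 \<in> Vs" using img U0 hs0 by force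
  have gs0: "gs 0 = 0" using gh U0 hs0 by force
  have W0: "0 \<in> W" using W_def V0 gs0 N0 by simp
  have NW: "\<forall>p\<in>N. hs p \<in> W \<and> gs (hs p) = p"
    using N_def W_def img gh by auto
  have WN: "\<forall>z\<in>W. gs z \<in> N \<and> hs (gs z) = z"
    using W_def hg by auto
  have gsWc: "continuous_on W gs" using gsc W_def continuous_on_subset by blast
  obtain M where M: "(gs has_derivative M) (at 0)" using gsd V0 by blast
  obtain D0 where D0: "(hs has_derivative D0) (at (gs 0))" using hsd U0 gs0 by auto
  have injM: "inj M" by (rule inv_deriv_inj[OF M D0 Vs V0 hg])
  have linM: "linear M" using M has_derivative_linear by blast
  have eqv: "\<forall>p\<in>N. \<forall>q\<in>N. f p = f q \<longleftrightarrow> g (hs p) = g (hs q)"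
  proof (intro ballI)
    fix p q assume p: "p \<in> N" and q: "q \<in> N"
    have e1: "f p = ht (g (hs p))" "f q = ht (g (hs q))" using p q S0 N_def by auto
    have u1: "g (hs p) \<in> Ut" "g (hs q) \<in> Ut" using p q N_def by auto
    have inv: "gt (ht (g (hs p))) = g (hs p)" "gt (ht (g (hs q))) = g (hs q)" using ght u1 by auto
    show "f p = f q \<longleftrightarrow> g (hs p) = g (hs q)"
    proof
      assume "f p = f q"
      then have "gt (ht (g (hs p))) = gt (ht (g (hs q)))" using e1 by simp
      then show "g (hs p) = g (hs q)" using inv by simp
    next
      assume "g (hs p) = g (hs q)"
      then show "f p = f q" using e1 by simp
    qed
  qed
  have sg: "\<forall>p\<in>N. singd (f' p) \<longleftrightarrow> singd (g' (hs p))"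
  proof
    fix p assume p: "p \<in> N"
    have pU: "p \<in> Us" using p N_def by auto
    have gU: "g (hs p) \<in> Ut" using p N_def by auto
    obtain Ds where Ds: "(hs has_derivative Ds) (at p)" using hsd pU by blast
    obtain Dt where Dt: "(ht has_derivative Dt) (at (g (hs p)))" using htd gU by blast
    have hpV: "hs p \<in> Vs" using img pU by auto
    obtain Dg where Dg: "(gs has_derivative Dg) (at (hs p))" using gsd hpV by blast
    have injDs: "inj Ds" by (rule inv_deriv_inj[OF Ds Dg Us pU gh])
    have surjDs: "surj Ds" by (rule inj_surj_deriv[OF Ds injDs])
    have htV: "ht (g (hs p)) \<in> Vt" using imgt gU by auto
    obtain Dgt where Dgt: "(gt has_derivative Dgt) (at (ht (g (hs p))))" using gtd htV by blast
    have injDt: "inj Dt" by (rule inv_deriv_inj[OF Dt Dgt Ut gU ght])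
    have linDt: "linear Dt" using Dt has_derivative_linear by blast
    have linDs: "linear Ds" using Ds has_derivative_linear by blast
    have linG: "linear (g' (hs p))" using gd has_derivative_linear by blast
    have "((\<lambda>x. ht (g (hs x))) has_derivative (\<lambda>v. Dt (g' (hs p) (Ds v)))) (at p)"
    proof -
      have "((g \<circ> hs) has_derivative (g' (hs p) \<circ> Ds)) (at p)" using diff_chain_at[OF Ds gd] .
      moreover have "(ht has_derivative Dt) (at ((g \<circ> hs) p))" using Dt by simp
      ultimately show ?thesis using diff_chain_at by (fastforce simp: o_def)
    qed
    then have "(f has_derivative (\<lambda>v. Dt (g' (hs p) (Ds v)))) (at p)"
      by (rule has_derivative_transform_within_open[OF _ oN p]) (use S0 N_def in auto)
    then have fe: "f' p = (\<lambda>v. Dt (g' (hs p) (Ds v)))" by (rule has_derivative_unique[OF fd])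
    show "singd (f' p) \<longleftrightarrow> singd (g' (hs p))"
    proof
      assume "singd (f' p)"
      then obtain v where v: "v \<noteq> 0" "Dt (g' (hs p) (Ds v)) = 0" unfolding singd_def fe by blast
      have "g' (hs p) (Ds v) = 0" using injD[OF injDt, of "g' (hs p) (Ds v)" 0] v(2) linear_0[OF linDt] by simp
      moreover have "Ds v \<noteq> 0" using injD[OF injDs, of v 0] v(1) linear_0[OF linDs] by auto
      ultimately show "singd (g' (hs p))" unfolding singd_def by blast
    next
      assume "singd (g' (hs p))"
      then obtain u where u: "u \<noteq> 0" "g' (hs p) u = 0" unfolding singd_def by blast
      obtain v where v: "u = Ds v" using surjDs by (metis surjD)
      have "v \<noteq> 0" using u(1) v linear_0[OF linDs] by auto
      moreover have "Dt (g' (hs p) (Ds v)) = 0" using u v linear_0[OF linDt] by simp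
      ultimately show "singd (f' p)" unfolding singd_def fe by blast
    qed
  qed
  show ?thesis
    by (rule that[OF oN N0 oW W0 gs0 NW WN gsWc M linM injM eqv sg])
qed



lemma lim_quot:
  fixes F :: "real \<Rightarrow> 'a::real_normed_vector"
  assumes "(F has_derivative (\<lambda>t. t *\<^sub>R v)) (at 0)" "F 0 = 0"
  shows "((\<lambda>t. F t /\<^sub>R t) \<longlongrightarrow> v) (at 0)"
proof -
  have "((\<lambda>y. ((F y - F 0) - (y - 0) *\<^sub>R v) /\<^sub>R norm (y - 0)) \<longlongrightarrow> 0) (at 0)"
    using assms(1) unfolding has_derivative_at_within by blast
  then have "((\<lambda>y. norm (((F y - F 0) - (y - 0) *\<^sub>R v) /\<^sub>R norm (y - 0))) \<longlongrightarrow> 0) (at 0)"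
    using tendsto_norm_zero by blast
  then have "((\<lambda>y. norm (F y /\<^sub>R y - v)) \<longlongrightarrow> 0) (at 0)"
  proof (rule Lim_transform_eventually)
    have "\<forall>\<^sub>F y in at (0::real). y \<noteq> 0" by (simp add: eventually_at_filter)
    then show "\<forall>\<^sub>F y in at 0. norm (((F y - F 0) - (y - 0) *\<^sub>R v) /\<^sub>R norm (y - 0)) = norm (F y /\<^sub>R y - v)"
    proof (rule eventually_mono)
      fix y :: real assume y: "y \<noteq> 0"
      have "F y /\<^sub>R y - v = (F y - y *\<^sub>R v) /\<^sub>R y" using y by (simp add: algebra_simps)
      then show "norm (((F y - F 0) - (y - 0) *\<^sub>R v) /\<^sub>R norm (y - 0)) = norm (F y /\<^sub>R y - v)"
        using assms(2) by simp
    qed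
  qed
  then have "((\<lambda>y. F y /\<^sub>R y - v) \<longlongrightarrow> 0) (at 0)" by (simp add: tendsto_norm_zero_iff)
  then show ?thesis by (simp add: Lim_null[symmetric])
qed

lemma subspace_union:
  assumes "subspace X" "subspace A" "subspace B" "X \<subseteq> A \<union> B"
  shows "X \<subseteq> A \<or> X \<subseteq> B"
proof (rule ccontr)
  assume "\<not> (X \<subseteq> A \<or> X \<subseteq> B)"
  then obtain u w where u: "u \<in> X" "u \<notin> A" and w: "w \<in> X" "w \<notin> B" by blast
  have uB: "u \<in> B" and wA: "w \<in> A" using u w assms(4) by blast+
  have "u + w \<in> X" using assms(1) u w by (simp add: subspace_add)
  then have "u + w \<in> A \<or> u + w \<in> B" using assms(4) by blast
  then show False
  proof
    assume "u + w \<in> A"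
    then have "(u + w) - w \<in> A" using subspace_diff[OF assms(2) _ wA] by blast
    then show False using u by simp
  next
    assume "u + w \<in> B"
    then have "(u + w) - u \<in> B" using subspace_diff[OF assms(3) _ uB] by blast
    then show False using w by simp
  qed
qed

lemma dim_lt:
  fixes u :: "'a::euclidean_space"
  assumes "subspace A" "u \<noteq> 0" "A \<subseteq> {w. u \<bullet> w = 0}" "wz \<notin> A" "u \<bullet> wz = 0"
  shows "dim A < DIM('a) - 1"
proof -
  have "subspace {w. u \<bullet> w = 0}" by (rule subspace_hyperplane)
  then have "span {w. u \<bullet> w = 0} = {w. u \<bullet> w = 0}" by simp
  moreover have "span A = A" using assms(1) by simp
  moreover have "A \<subset> {w. u \<bullet> w = 0}" using assms(3-5) by blast
  ultimately have "dim A < dim {w. u \<bullet> w = 0}" using dim_psubset by metis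
  then show ?thesis using dim_hyperplane[OF assms(2)] by simp
qed

lemma inner_axis1: "axis i (k::real) \<bullet> y = k * y $ i"
  by (simp add: inner_axis')

definition G :: "'n \<Rightarrow> real \<times> (real^'n) \<Rightarrow> real \<times> real \<times> (real^'n)" where
  "G i0 = Phi 3 (-4) (axis i0 1) (axis i0 (-2))"

definition G' :: "'n \<Rightarrow> real \<times> (real^'n) \<Rightarrow> real \<times> (real^'n) \<Rightarrow> real \<times> real \<times> (real^'n)" where
  "G' i0 = Phi' 3 (-4) (axis i0 1) (axis i0 (-2))"

lemma singd_Phi:
  "singd (Phi' a c b d p) \<longleftrightarrow> 4*a*fst p^3 + 2*fst p*(b \<bullet> snd p) = 0 \<and> 3*c*fst p^2 + d \<bullet> snd p = 0"
proof
  assume "singd (Phi' a c b d p)"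
  then obtain v where v: "v \<noteq> 0" "Phi' a c b d p v = 0" unfolding singd_def by blast
  have sv: "snd v = 0" using v(2) unfolding Phi'_def by (simp add: zero_prod_def)
  then have fv: "fst v \<noteq> 0" using v(1) by (metis prod.collapse zero_prod_def)
  have "(4*a*fst p^3 + 2*fst p*(b \<bullet> snd p)) * fst v = 0" "(3*c*fst p^2 + d \<bullet> snd p) * fst v = 0"
    using v(2) sv unfolding Phi'_def by (simp_all add: zero_prod_def)
  then show "4*a*fst p^3 + 2*fst p*(b \<bullet> snd p) = 0 \<and> 3*c*fst p^2 + d \<bullet> snd p = 0" using fv by simp
next
  assume h: "4*a*fst p^3 + 2*fst p*(b \<bullet> snd p) = 0 \<and> 3*c*fst p^2 + d \<bullet> snd p = 0"
  have "Phi' a c b d p (1, 0) = 0" using h unfolding Phi'_def by (simp add: zero_prod_def)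
  then show "singd (Phi' a c b d p)" unfolding singd_def by (intro exI[of _ "(1,0)"]) (simp add: zero_prod_def)
qed

lemma G_sing: "singd (G' i0 p) \<longleftrightarrow> snd p $ i0 = -6 * fst p^2"
proof -
  have "singd (G' i0 p) \<longleftrightarrow> 12*fst p^3 + 2*fst p*(snd p $ i0) = 0 \<and> -12*fst p^2 - 2 * snd p $ i0 = 0"
    unfolding G'_def singd_Phi inner_axis1 by simp
  also have "\<dots> \<longleftrightarrow> snd p $ i0 = -6 * fst p^2"
    by (auto simp: algebra_simps power3_eq_cube power2_eq_square)
  finally show ?thesis .
qed

lemma G_partner:
  assumes "G i0 p = G i0 q" "p \<noteq> q"
  shows "snd q = snd p \<and> fst q = - fst p \<and> fst p \<noteq> 0 \<and> snd p $ i0 = -2 * fst p^2"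
proof -
  obtain x y where p: "p = (x, y)" by (cases p)
  obtain x' y' where q: "q = (x', y')" by (cases q)
  have yy: "y' = y" using assms(1) unfolding p q G_def Phi_def by simp
  let ?Y = "y $ i0"
  have e1: "3*x^4 + x^2 * ?Y = 3*x'^4 + x'^2 * ?Y" and e2: "-4*x^3 + x*(-2 * ?Y) = -4*x'^3 + x'*(-2 * ?Y)"
    using assms(1) unfolding p q G_def Phi_def inner_axis1 yy by simp_all
  have xx: "x \<noteq> x'" using assms(2) p q yy by simp
  have "(x - x') * (2*(x^2 + x*x' + x'^2) + ?Y) = 0"
    using e2 by (simp add: algebra_simps power2_eq_square power3_eq_cube)
  then have Y: "?Y = -2*(x^2 + x*x' + x'^2)" using xx by simp
  have "(x^2 - x'^2) * (3*x^2 + 3*x'^2 + ?Y) = 0"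
    using e1 by (simp add: algebra_simps power2_eq_square power3_eq_cube eval_nat_numeral)
  then have "(x^2 - x'^2) * ((x - x')^2) = 0" unfolding Y by (simp add: algebra_simps power2_eq_square)
  then have "x^2 = x'^2" using xx by simp
  then have x': "x' = -x" using xx by (metis power2_eq_iff)
  show ?thesis using Y x' xx p q yy by (auto simp: power2_eq_square)
qed

lemma G_no_sd:
  assumes "G i0 p = G i0 q" "p \<noteq> q" shows "\<not> singd (G' i0 p)"
  using G_partner[OF assms] G_sing[of i0 p] by (auto simp: power2_eq_square)

lemma Phi_cont: "continuous_on UNIV (Phi a c b d)"
  by (rule continuous_at_imp_continuous_on) (use Phi_deriv has_derivative_continuous in blast)

lemma Phi_0: "Phi a c b d 0 = 0"
  by (simp add: Phi_def zero_prod_def)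

lemma transfer_Phi:
  assumes AE: "A_equivalent (Phi a c b d) (G i0)"
  obtains N W \<phi> \<psi> M where "open N" "0 \<in> N" "open W" "0 \<in> W" "\<psi> 0 = 0"
    "\<forall>p\<in>N. \<phi> p \<in> W \<and> \<psi> (\<phi> p) = p" "\<forall>z\<in>W. \<psi> z \<in> N \<and> \<phi> (\<psi> z) = z"
    "continuous_on W \<psi>" "(\<psi> has_derivative M) (at 0)" "linear M" "inj M"
    "\<forall>p\<in>N. \<forall>q\<in>N. Phi a c b d p = Phi a c b d q \<longleftrightarrow> G i0 (\<phi> p) = G i0 (\<phi> q)"
    "\<forall>p\<in>N. singd (Phi' a c b d p) \<longleftrightarrow> singd (G' i0 (\<phi> p))"
proof -
  have gc: "continuous_on UNIV (G i0)" unfolding G_def by (rule Phi_cont)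
  have g0: "G i0 0 = 0" unfolding G_def by (rule Phi_0)
  have gd: "\<And>p. (G i0 has_derivative G' i0 p) (at p)" unfolding G_def G'_def by (rule Phi_deriv)
  show ?thesis
    by (rule transfer[OF AE gc g0 Phi_deriv gd]) (rule that; assumption)
qed



lemma ev_ne0: "\<forall>\<^sub>F t in at (0::real). t \<noteq> 0" by (simp add: eventually_at_filter)

lemma inv_sd:
  fixes i0 :: "'n::finite" and b d :: "real^'n"
  assumes AE: "A_equivalent (Phi a c b d) (G i0)"
    and p: "(p \<longlongrightarrow> 0) (at (0::real))" and q: "(q \<longlongrightarrow> 0) (at 0)"
    and ev: "\<forall>\<^sub>F t in at 0. Phi a c b d (p t) = Phi a c b d (q t) \<and> p t \<noteq> q t \<and> singd (Phi' a c b d (p t))"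
  shows False
proof -
  obtain N W \<phi> \<psi> M where oN: "open N" and N0: "0 \<in> N"
    and NW: "\<forall>p\<in>N. \<phi> p \<in> W \<and> \<psi> (\<phi> p) = p"
    and eqv: "\<forall>p\<in>N. \<forall>q\<in>N. Phi a c b d p = Phi a c b d q \<longleftrightarrow> G i0 (\<phi> p) = G i0 (\<phi> q)"
    and sg: "\<forall>p\<in>N. singd (Phi' a c b d p) \<longleftrightarrow> singd (G' i0 (\<phi> p))"
    by (rule transfer_Phi[OF AE]) blast
  have "\<forall>\<^sub>F t in at 0. p t \<in> N" by (rule topological_tendstoD[OF p oN N0])
  moreover have "\<forall>\<^sub>F t in at 0. q t \<in> N" by (rule topological_tendstoD[OF q oN N0])
  ultimately have "\<forall>\<^sub>F t in at 0. p t \<in> N \<and> q t \<in> N \<and> Phi a c b d (p t) = Phi a c b d (q t) \<and> p t \<noteq> q t \<and> singd (Phi' a c b d (p t))"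
    using ev by eventually_elim blast
  then obtain t where t: "p t \<in> N" "q t \<in> N" "Phi a c b d (p t) = Phi a c b d (q t)" "p t \<noteq> q t"
     "singd (Phi' a c b d (p t))"
    using eventually_happens'[OF at_neq_bot] by blast
  have "G i0 (\<phi> (p t)) = G i0 (\<phi> (q t))" using eqv t by blast
  moreover have "\<phi> (p t) \<noteq> \<phi> (q t)" using NW t by metis
  moreover have "singd (G' i0 (\<phi> (p t)))" using sg t by blast
  ultimately show False using G_no_sd by blast
qed

lemma inv_inj:
  fixes i0 :: "'n::finite" and b d :: "real^'n"
  assumes AE: "A_equivalent (Phi a c b d) (G i0)" and inj: "inj (Phi a c b d)"
  shows False
proof -
  obtain N W \<phi> \<psi> M where oW: "open W" and W0: "0 \<in> W" and psi0: "\<psi> 0 = 0"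
    and WN: "\<forall>z\<in>W. \<psi> z \<in> N \<and> \<phi> (\<psi> z) = z"
    and eqv: "\<forall>p\<in>N. \<forall>q\<in>N. Phi a c b d p = Phi a c b d q \<longleftrightarrow> G i0 (\<phi> p) = G i0 (\<phi> q)"
    by (rule transfer_Phi[OF AE]) blast
  define pt :: "real \<Rightarrow> real \<times> (real^'n)" where "pt t = (t, (-2*t^2) *\<^sub>R axis i0 1)" for t
  define qt :: "real \<Rightarrow> real \<times> (real^'n)" where "qt t = (-t, (-2*t^2) *\<^sub>R axis i0 1)" for t
  have "((\<lambda>t. (t, (-2*t^2) *\<^sub>R axis i0 (1::real))) \<longlongrightarrow> (0, (-2*0^2) *\<^sub>R axis i0 1)) (at (0::real))"
    by (intro tendsto_intros)
  then have pl: "(pt \<longlongrightarrow> 0) (at 0)" unfolding pt_def by (simp add: zero_prod_def)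
  have "((\<lambda>t. (-t, (-2*t^2) *\<^sub>R axis i0 (1::real))) \<longlongrightarrow> (-0, (-2*0^2) *\<^sub>R axis i0 1)) (at (0::real))"
    by (intro tendsto_intros)
  then have ql: "(qt \<longlongrightarrow> 0) (at 0)" unfolding qt_def by (simp add: zero_prod_def)
  have "\<forall>\<^sub>F t in at 0. pt t \<in> W" by (rule topological_tendstoD[OF pl oW W0])
  moreover have "\<forall>\<^sub>F t in at 0. qt t \<in> W" by (rule topological_tendstoD[OF ql oW W0])
  ultimately have "\<forall>\<^sub>F t in at 0. pt t \<in> W \<and> qt t \<in> W \<and> t \<noteq> 0"
    using ev_ne0 by eventually_elim blast
  then obtain t where t: "pt t \<in> W" "qt t \<in> W" "t \<noteq> 0"
    using eventually_happens'[OF at_neq_bot] by blast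
  have Geq: "G i0 (pt t) = G i0 (qt t)"
    unfolding G_def Phi_def pt_def qt_def inner_axis1 by (simp add: algebra_simps eval_nat_numeral)
  have "G i0 (\<phi> (\<psi> (pt t))) = G i0 (\<phi> (\<psi> (qt t)))" using WN t Geq by simp
  then have "Phi a c b d (\<psi> (pt t)) = Phi a c b d (\<psi> (qt t))" using eqv WN t by blast
  then have "\<psi> (pt t) = \<psi> (qt t)" using inj by (simp add: inj_eq)
  then have "\<phi> (\<psi> (pt t)) = \<phi> (\<psi> (qt t))" by simp
  then have "pt t = qt t" using WN t by simp
  then show False using t unfolding pt_def qt_def by simp
qed

lemma inv_sym:
  fixes i0 :: "'n::finite" and b d :: "real^'n"
  assumes AE: "A_equivalent (Phi a c b d) (G i0)" and sym: "\<And>x y. Phi a c b d (x, y) = Phi a c b d (-x, y)"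
  shows False
proof -
  obtain N W \<phi> \<psi> M where oN: "open N" and N0: "0 \<in> N" and oW: "open W"
    and NW: "\<forall>p\<in>N. \<phi> p \<in> W \<and> \<psi> (\<phi> p) = p" and WN: "\<forall>z\<in>W. \<psi> z \<in> N \<and> \<phi> (\<psi> z) = z"
    and psic: "continuous_on W \<psi>"
    and eqv: "\<forall>p\<in>N. \<forall>q\<in>N. Phi a c b d p = Phi a c b d q \<longleftrightarrow> G i0 (\<phi> p) = G i0 (\<phi> q)"
    by (rule transfer_Phi[OF AE]) blast
  obtain r where r: "r > 0" "ball 0 r \<subseteq> N" using oN N0 openE by blast
  define Ob where "Ob = ball 0 r \<inter> {p::real \<times> (real^'n). fst p \<noteq> 0}"
  have oO: "open Ob" unfolding Ob_def
    by (intro open_Int open_ball open_Collect_neq continuous_intros)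
  have key: "snd (\<phi> p) $ i0 = -2 * fst (\<phi> p)^2" if p: "p \<in> Ob" for p
  proof -
    define p' where "p' = (- fst p, snd p)"
    have "norm p' = norm p" unfolding p'_def by (cases p) (simp add: norm_Pair)
    then have p'N: "p' \<in> N" using p r unfolding Ob_def by auto
    have pN: "p \<in> N" using p r unfolding Ob_def by auto
    have "p' \<noteq> p" using p unfolding Ob_def p'_def by (cases p) auto
    have "Phi a c b d p = Phi a c b d p'" unfolding p'_def using sym[of "fst p" "snd p"] by simp
    then have e: "G i0 (\<phi> p) = G i0 (\<phi> p')" using eqv pN p'N by blast
    have "\<phi> p \<noteq> \<phi> p'" using NW pN p'N \<open>p' \<noteq> p\<close> by metis
    then show ?thesis using G_partner[OF e] by blast
  qed
  define Z where "Z = W \<inter> \<psi> -` Ob"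
  have oZ: "open Z" unfolding Z_def by (rule continuous_open_preimage[OF psic oW oO])
  have Zk: "snd z $ i0 = -2 * fst z^2" if "z \<in> Z" for z
    using key[of "\<psi> z"] that WN unfolding Z_def by auto
  have p0: "(r/2, 0) \<in> Ob" using r unfolding Ob_def by (simp add: norm_Pair)
  have pN0: "(r/2, 0) \<in> N" using p0 r unfolding Ob_def by auto
  then have "\<phi> (r/2,0) \<in> W" "\<psi> (\<phi> (r/2,0)) = (r/2,0)" using NW by auto
  then have "\<phi> (r/2, 0) \<in> Z" using p0 unfolding Z_def by auto
  then obtain z0 where z0: "z0 \<in> Z" by blast
  obtain e where e: "e > 0" "ball z0 e \<subseteq> Z" using oZ z0 openE by blast
  define z1 where "z1 = z0 + (0, (e/2) *\<^sub>R axis i0 (1::real))"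
  have "dist z0 z1 = e/2" unfolding z1_def dist_norm using e by (simp add: norm_Pair)
  then have "z1 \<in> Z" using e by auto
  then have "snd z1 $ i0 = -2 * fst z1^2" by (rule Zk)
  moreover have "snd z0 $ i0 = -2 * fst z0^2" using z0 by (rule Zk)
  ultimately show False using e unfolding z1_def by simp
qed



lemma inv_tan:
  fixes i0 :: "'n::finite" and b d :: "real^'n"
    and A B :: "(real \<times> (real^'n)) set" and C :: "(real \<times> (real \<times> (real^'n))) set"
  assumes AE: "A_equivalent (Phi a c b d) (G i0)"
    and sA: "subspace A" and sB: "subspace B"
    and dA: "dim A < DIM(real \<times> (real^'n)) - 1" and dB: "dim B < DIM(real \<times> (real^'n)) - 1"
    and cC: "closed C" and inC: "\<forall>t p. t \<noteq> 0 \<longrightarrow> singd (Phi' a c b d p) \<longrightarrow> (t, p /\<^sub>R t) \<in> C"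
    and C0: "\<forall>w. (0, w) \<in> C \<longrightarrow> w \<in> A \<union> B"
  shows False
proof -
  obtain N W \<phi> \<psi> M where oW: "open W" and W0: "0 \<in> W" and psi0: "\<psi> 0 = 0"
    and WN: "\<forall>z\<in>W. \<psi> z \<in> N \<and> \<phi> (\<psi> z) = z"
    and Md: "(\<psi> has_derivative M) (at 0)" and linM: "linear M" and injM: "inj M"
    and sg: "\<forall>p\<in>N. singd (Phi' a c b d p) \<longleftrightarrow> singd (G' i0 (\<phi> p))"
    by (rule transfer_Phi[OF AE]) blast
  define T where "T = {v::real \<times> (real^'n). (0, axis i0 (1::real)) \<bullet> v = 0}"
  have Tchar: "v \<in> T \<longleftrightarrow> snd v $ i0 = 0" for v
    unfolding T_def by (cases v) (simp add: inner_axis1)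
  have MT: "M v \<in> A \<union> B" if v: "v \<in> T" for v
  proof -
    have vY: "snd v $ i0 = 0" using v Tchar by blast
    define \<gamma> :: "real \<Rightarrow> real \<times> (real^'n)" where
      "\<gamma> t = (t * fst v, t *\<^sub>R snd v + (-6 * t^2 * (fst v)^2) *\<^sub>R axis i0 1)" for t
    have g0: "\<gamma> 0 = 0" unfolding \<gamma>_def by (simp add: zero_prod_def)
    have gd: "(\<gamma> has_derivative (\<lambda>s. s *\<^sub>R v)) (at 0)"
    proof -
      have "((\<lambda>t. (t * fst v, t *\<^sub>R snd v + (-6 * t^2 * (fst v)^2) *\<^sub>R axis i0 (1::real))) has_derivative
          (\<lambda>s. (s * fst v, s *\<^sub>R snd v + (-6 * (2 * 0 * s) * (fst v)^2) *\<^sub>R axis i0 1))) (at 0)"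
        by (rule derivative_eq_intros refl | simp)+
      then show ?thesis unfolding \<gamma>_def by (simp add: scaleR_prod_def)
    qed
    have "isCont \<gamma> 0" using gd has_derivative_continuous by blast
    then have "(\<gamma> \<longlongrightarrow> 0) (at 0)" using g0 by (metis isCont_def)
    then have evW: "\<forall>\<^sub>F t in at 0. \<gamma> t \<in> W" by (rule topological_tendstoD[OF _ oW W0])
    have sing_t: "singd (Phi' a c b d (\<psi> (\<gamma> t)))" if "\<gamma> t \<in> W" for t
    proof -
      have "snd (\<gamma> t) $ i0 = -6 * fst (\<gamma> t)^2"
        unfolding \<gamma>_def using vY by (simp add: power_mult_distrib)
      then have "singd (G' i0 (\<gamma> t))" by (simp add: G_sing)
      moreover have "\<psi> (\<gamma> t) \<in> N" "\<phi> (\<psi> (\<gamma> t)) = \<gamma> t" using WN that by auto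
      ultimately show ?thesis using sg by auto
    qed
    have Md': "(\<psi> has_derivative M) (at (\<gamma> 0))" using Md g0 by simp
    have "((\<psi> \<circ> \<gamma>) has_derivative (M \<circ> (\<lambda>s. s *\<^sub>R v))) (at 0)" by (rule diff_chain_at[OF gd Md'])
    moreover have "M \<circ> (\<lambda>s. s *\<^sub>R v) = (\<lambda>s. s *\<^sub>R M v)"
      using linM by (simp add: o_def linear_cmul)
    ultimately have "((\<psi> \<circ> \<gamma>) has_derivative (\<lambda>s. s *\<^sub>R M v)) (at 0)" by simp
    moreover have "(\<psi> \<circ> \<gamma>) 0 = 0" using g0 psi0 by simp
    ultimately have lim: "((\<lambda>t. (\<psi> \<circ> \<gamma>) t /\<^sub>R t) \<longlongrightarrow> M v) (at 0)" by (rule lim_quot)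
    have lim2: "((\<lambda>t. (t, (\<psi> \<circ> \<gamma>) t /\<^sub>R t)) \<longlongrightarrow> (0, M v)) (at 0)"
      by (rule tendsto_Pair[OF tendsto_ident_at lim])
    have evC: "\<forall>\<^sub>F t in at 0. (t, (\<psi> \<circ> \<gamma>) t /\<^sub>R t) \<in> C"
      using evW ev_ne0
    proof eventually_elim
      case (elim t)
      have "singd (Phi' a c b d (\<psi> (\<gamma> t)))" using sing_t elim(1) by blast
      from inC[rule_format, OF elim(2) this] show ?case by (simp only: comp_apply)
    qed
    have "(0, M v) \<in> C" by (rule Lim_in_closed_set[OF cC evC at_neq_bot lim2])
    then show ?thesis using C0 by blast
  qed
  have sT: "subspace T" unfolding T_def by (rule subspace_hyperplane)
  have sMT: "subspace (M ` T)" by (rule real_vector.linear_subspace_image[OF linM sT])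
  have "M ` T \<subseteq> A \<union> B" using MT by blast
  then have "M ` T \<subseteq> A \<or> M ` T \<subseteq> B" using subspace_union[OF sMT sA sB] by blast
  then have "dim (M ` T) \<le> dim A \<or> dim (M ` T) \<le> dim B" using dim_subset by blast
  moreover have "dim (M ` T) = dim T"
    using dim_image_eq[OF linM] injM by (meson inj_on_subset subset_UNIV)
  moreover have "dim T = DIM(real \<times> (real^'n)) - 1"
    unfolding T_def by (rule dim_hyperplane) (simp add: zero_prod_def axis_eq_0_iff)
  ultimately show False using dA dB by linarith
qed



lemma cube_inj: "(x::real)^3 = y^3 \<Longrightarrow> x = y"
  by (metis odd_real_root_power_cancel odd_numeral)

definition Aset :: "real^'n \<Rightarrow> (real \<times> (real^'n)) set" where
  "Aset d = {w. (1, 0) \<bullet> w = 0} \<inter> {w. (0, d) \<bullet> w = 0}"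

lemma Aset_iff: "w \<in> Aset d \<longleftrightarrow> fst w = 0 \<and> d \<bullet> snd w = 0"
  unfolding Aset_def by (cases w) simp

lemma Aset_sub: "subspace (Aset d)"
  unfolding Aset_def by (intro real_vector.subspace_inter subspace_hyperplane)

lemma Aset_dim:
  fixes d :: "real^'n::finite"
  assumes "d \<noteq> 0" shows "dim (Aset d) < DIM(real \<times> (real^'n)) - 1"
proof (rule dim_lt[OF Aset_sub, where u="(1,0)" and wz="(0, d)"])
  show "(1::real, 0::real^'n) \<noteq> 0" by (simp add: zero_prod_def)
  show "Aset d \<subseteq> {w. (1, 0) \<bullet> w = 0}" unfolding Aset_def by blast
  show "(0, d) \<notin> Aset d" using assms by (simp add: Aset_iff)
  show "(1, 0) \<bullet> (0::real, d) = 0" by simp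
qed

lemma use_A:
  fixes i0 :: "'n::finite" and b d :: "real^'n"
  assumes AE: "A_equivalent (Phi a c b d) (G i0)" and d: "d \<noteq> 0"
    and S: "\<And>p. singd (Phi' a c b d p) \<Longrightarrow> fst p = 0 \<and> d \<bullet> snd p = 0"
  shows False
proof (rule inv_tan[OF AE Aset_sub Aset_sub Aset_dim[OF d] Aset_dim[OF d]])
  show "closed (UNIV \<times> Aset d)" by (intro closed_Times closed_UNIV closed_subspace Aset_sub)
  show "\<forall>t p. t \<noteq> 0 \<longrightarrow> singd (Phi' a c b d p) \<longrightarrow> (t, p /\<^sub>R t) \<in> UNIV \<times> Aset d"
  proof (intro allI impI)
    fix t p assume "singd (Phi' a c b d p)"
    then have pA: "p \<in> Aset d" using S Aset_iff by blast
    show "(t, p /\<^sub>R t) \<in> UNIV \<times> Aset d" using subspace_scale[OF Aset_sub pA, of "inverse t"] by simp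
  qed
  show "\<forall>w. (0, w) \<in> UNIV \<times> Aset d \<longrightarrow> w \<in> Aset d \<union> Aset d" by simp
qed

lemma use_AB:
  fixes i0 :: "'n::finite" and b d :: "real^'n"
  assumes AE: "A_equivalent (Phi a c b d) (G i0)" and d: "d \<noteq> 0"
    and y0: "d \<bullet> y0 = 0" "b \<bullet> y0 \<noteq> 0"
  shows False
proof -
  define B where "B = {w::real \<times> (real^'n). (0, d) \<bullet> w = 0} \<inter> {w. (0, b) \<bullet> w = 0}"
  have sB: "subspace B" unfolding B_def by (intro real_vector.subspace_inter subspace_hyperplane)
  have Bi: "w \<in> B \<longleftrightarrow> d \<bullet> snd w = 0 \<and> b \<bullet> snd w = 0" for w unfolding B_def by (cases w) simp
  have dB: "dim B < DIM(real \<times> (real^'n)) - 1"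
  proof (rule dim_lt[OF sB, where u="(0,d)" and wz="(0, y0)"])
    show "(0::real, d) \<noteq> 0" using d by (simp add: zero_prod_def)
    show "B \<subseteq> {w. (0, d) \<bullet> w = 0}" unfolding B_def by blast
    show "(0, y0) \<notin> B" using y0 by (simp add: Bi)
    show "(0, d) \<bullet> (0::real, y0) = 0" using y0 by simp
  qed
  define C where "C = ({z::real \<times> (real \<times> (real^'n)). fst (snd z) = 0} \<inter> {z. d \<bullet> snd (snd z) = 0}) \<union>
     ({z. b \<bullet> snd (snd z) = -2*a*fst z*fst (snd z)^2} \<inter> {z. d \<bullet> snd (snd z) = -3*c*fst z*fst (snd z)^2})"
  have cC: "closed C" unfolding C_def
    by (intro closed_Un closed_Int closed_Collect_eq continuous_intros)
  show False
  proof (rule inv_tan[OF AE Aset_sub sB Aset_dim[OF d] dB cC])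
    show "\<forall>t p. t \<noteq> 0 \<longrightarrow> singd (Phi' a c b d p) \<longrightarrow> (t, p /\<^sub>R t) \<in> C"
    proof (intro allI impI)
      fix t :: real and p :: "real \<times> (real^'n)" assume t: "t \<noteq> 0" and s: "singd (Phi' a c b d p)"
      obtain x y where p: "p = (x, y)" by (cases p)
      have e0: "4*a*fst p^3 + 2*fst p*(b \<bullet> snd p) = 0 \<and> 3*c*fst p^2 + d \<bullet> snd p = 0"
        using s singd_Phi by blast
      have e: "4*a*x^3 + 2*x*(b \<bullet> y) = 0" "3*c*x^2 + d \<bullet> y = 0" using e0[unfolded p fst_conv snd_conv] by blast+
      show "(t, p /\<^sub>R t) \<in> C"
      proof (cases "x = 0")
        case True
        then show ?thesis using e p unfolding C_def by (simp add: inner_scaleR_right)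
      next
        case False
        have "2*x*(2*a*x^2 + b \<bullet> y) = 0" using e(1) by (simp add: algebra_simps power2_eq_square power3_eq_cube)
        then have "b \<bullet> y = -2*a*x^2" using False by simp
        then have "b \<bullet> (y /\<^sub>R t) = -2*a*t*(x/t)^2" using t
          by (simp add: inner_scaleR_right power2_eq_square field_simps)
        moreover have "d \<bullet> (y /\<^sub>R t) = -3*c*t*(x/t)^2" using t e(2)
          by (simp add: inner_scaleR_right power2_eq_square field_simps)
        ultimately show ?thesis using p unfolding C_def by (simp add: divide_inverse ac_simps)
      qed
    qed
    show "\<forall>w. (0, w) \<in> C \<longrightarrow> w \<in> Aset d \<union> B"
      unfolding C_def by (auto simp: Aset_iff Bi)
  qed
qed



lemma inv_sd2:
  fixes i0 :: "'n::finite" and b d yv :: "real^'n"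
  assumes AE: "A_equivalent (Phi a c b d) (G i0)" and \<beta>: "\<beta> \<noteq> 1"
    and H: "\<And>t. t \<noteq> 0 \<Longrightarrow> Phi a c b d (t, (\<alpha>*t^2) *\<^sub>R yv) = Phi a c b d (\<beta>*t, (\<alpha>*t^2) *\<^sub>R yv)
              \<and> singd (Phi' a c b d (t, (\<alpha>*t^2) *\<^sub>R yv))"
  shows False
proof (rule inv_sd[OF AE, where p="\<lambda>t. (t, (\<alpha>*t^2) *\<^sub>R yv)" and q="\<lambda>t. (\<beta>*t, (\<alpha>*t^2) *\<^sub>R yv)"])
  have "((\<lambda>t. (t, (\<alpha>*t^2) *\<^sub>R yv)) \<longlongrightarrow> (0, (\<alpha>*0^2) *\<^sub>R yv)) (at (0::real))"
    by (intro tendsto_intros)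
  then show "((\<lambda>t. (t, (\<alpha>*t^2) *\<^sub>R yv)) \<longlongrightarrow> 0) (at (0::real))" by (simp add: zero_prod_def)
  have "((\<lambda>t. (\<beta>*t, (\<alpha>*t^2) *\<^sub>R yv)) \<longlongrightarrow> (\<beta>*0, (\<alpha>*0^2) *\<^sub>R yv)) (at (0::real))"
    by (intro tendsto_intros)
  then show "((\<lambda>t. (\<beta>*t, (\<alpha>*t^2) *\<^sub>R yv)) \<longlongrightarrow> 0) (at (0::real))" by (simp add: zero_prod_def)
  show "\<forall>\<^sub>F t in at 0. Phi a c b d (t, (\<alpha>*t^2) *\<^sub>R yv) = Phi a c b d (\<beta>*t, (\<alpha>*t^2) *\<^sub>R yv) \<and>
      (t, (\<alpha>*t^2) *\<^sub>R yv) \<noteq> (\<beta>*t, (\<alpha>*t^2) *\<^sub>R yv) \<and> singd (Phi' a c b d (t, (\<alpha>*t^2) *\<^sub>R yv))"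
    using ev_ne0
  proof eventually_elim
    case (elim t)
    have "t \<noteq> \<beta> * t" using elim \<beta> by (metis mult_cancel_right1)
    then show ?case using H[OF elim] by simp
  qed
qed

lemma prop_k:
  fixes b d :: "real^'n::finite"
  assumes d: "d \<noteq> 0" and H: "\<forall>y. d \<bullet> y = 0 \<longrightarrow> b \<bullet> y = 0"
  shows "b = ((b \<bullet> d) / (d \<bullet> d)) *\<^sub>R d"
proof -
  define k where "k = (b \<bullet> d) / (d \<bullet> d)"
  have dd: "d \<bullet> d \<noteq> 0" using d by simp
  define z where "z = b - k *\<^sub>R d"
  have dz: "d \<bullet> z = 0" unfolding z_def k_def using dd by (simp add: inner_diff_right inner_commute)
  then have bz: "b \<bullet> z = 0" using H by blast
  have "z \<bullet> z = b \<bullet> z - k * (d \<bullet> z)" unfolding z_def by (simp add: inner_diff_left)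
  then have "z = 0" using dz bz by simp
  then show ?thesis unfolding z_def k_def by simp
qed

lemma necessity:
  fixes i0 :: "'n::finite" and b d :: "real^'n"
  assumes AE: "A_equivalent (Phi a c b d) (G i0)"
  shows "(\<forall>i. 2*a*d$i = 3*b$i*c) \<and> (\<exists>i. a*b$i*c*d$i \<noteq> 0)"
proof (rule ccontr)
  assume neg: "\<not> ?thesis"
  have sPhi: "4*a*x^3 + 2*x*(b \<bullet> y) = 0 \<and> 3*c*x^2 + d \<bullet> y = 0" if "singd (Phi' a c b d (x, y))" for x y
    using that singd_Phi[of a c b d "(x,y)"] by simp
  show False
  proof (cases "c = 0")
    case c: False
    show False
    proof (cases "d = 0")
      case d: True
      have "inj (Phi a c b d)"
      proof (rule injI)
        fix p q assume e: "Phi a c b d p = Phi a c b d q"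
        have s: "snd p = snd q" using e unfolding Phi_def by simp
        have "c * fst p ^ 3 = c * fst q ^ 3" using e d unfolding Phi_def by simp
        then have "fst p = fst q" using c cube_inj by simp
        then show "p = q" using s by (simp add: prod_eq_iff)
      qed
      then show False using inv_inj[OF AE] by blast
    next
      case d: False
      show False
      proof (cases "a = 0")
        case a: True
        show False
        proof (cases "\<forall>y. b \<bullet> y = 0 \<longrightarrow> d \<bullet> y = 0")
          case True
          show False
          proof (rule use_A[OF AE d])
            fix p assume "singd (Phi' a c b d p)"
            then obtain x y where p: "p = (x, y)" and e: "4*a*x^3 + 2*x*(b \<bullet> y) = 0" "3*c*x^2 + d \<bullet> y = 0"
              using sPhi by (cases p) blast
            have x: "x = 0"
            proof (rule ccontr)
              assume x: "x \<noteq> 0"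
              then have "b \<bullet> y = 0" using e(1) a by simp
              then have "d \<bullet> y = 0" using True by blast
              then show False using e(2) x c by simp
            qed
            then show "fst p = 0 \<and> d \<bullet> snd p = 0" using e p by simp
          qed
        next
          case False
          then obtain y1 where y1: "b \<bullet> y1 = 0" "d \<bullet> y1 \<noteq> 0" by blast
          define y0 where "y0 = y1 /\<^sub>R (d \<bullet> y1)"
          have y0: "b \<bullet> y0 = 0" "d \<bullet> y0 = 1" unfolding y0_def using y1 by (simp_all add: inner_scaleR_right)
          show False
          proof (rule inv_sd2[OF AE, where \<beta>="-2" and \<alpha>="-3*c" and yv=y0])
            fix t :: real assume "t \<noteq> 0"
            show "Phi a c b d (t, (-3*c*t^2) *\<^sub>R y0) = Phi a c b d (-2*t, (-3*c*t^2) *\<^sub>R y0)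
              \<and> singd (Phi' a c b d (t, (-3*c*t^2) *\<^sub>R y0))"
              unfolding Phi_def singd_Phi using a y0
              by (simp add: inner_scaleR_right algebra_simps eval_nat_numeral)
          qed simp
        qed
      next
        case a: False
        have nonprop: "\<not> (\<forall>i. 2*a*d$i = 3*b$i*c)"
        proof
          assume pr: "\<forall>i. 2*a*d$i = 3*b$i*c"
          obtain i where di: "d$i \<noteq> 0" using d by (metis vec_eq_iff zero_index)
          have "b$i \<noteq> 0" using pr di a by (metis mult_eq_0_iff mult_zero_right zero_neq_numeral)
          then have "a*b$i*c*d$i \<noteq> 0" using a c di by simp
          then show False using neg pr by blast
        qed
        then obtain j where j: "2*a*d$j \<noteq> 3*b$j*c" by blast
        show False
        proof (cases "\<forall>y. d \<bullet> y = 0 \<longrightarrow> b \<bullet> y = 0")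
          case True
          define k where "k = (b \<bullet> d) / (d \<bullet> d)"
          have bk: "b = k *\<^sub>R d" unfolding k_def by (rule prop_k[OF d True])
          show False
          proof (rule use_A[OF AE d])
            fix p assume "singd (Phi' a c b d p)"
            then obtain x y where p: "p = (x, y)" and e: "4*a*x^3 + 2*x*(b \<bullet> y) = 0" "3*c*x^2 + d \<bullet> y = 0"
              using sPhi by (cases p) blast
            have x: "x = 0"
            proof (rule ccontr)
              assume x: "x \<noteq> 0"
              have "2*x*(2*a*x^2 + b \<bullet> y) = 0" using e(1) by (simp add: algebra_simps power2_eq_square power3_eq_cube)
              then have l: "b \<bullet> y = -2*a*x^2" using x by simp
              have m: "d \<bullet> y = -3*c*x^2" using e(2) by simp
              have "b \<bullet> y = k * (d \<bullet> y)" using bk by simp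
              then have "-2*a*x^2 = k*(-3*c*x^2)" using l m by simp
              then have "2*a = 3*c*k" using x by (simp add: algebra_simps)
              moreover have "b$j = k * d$j" using bk by simp
              ultimately show False using j by (simp add: algebra_simps)
            qed
            then show "fst p = 0 \<and> d \<bullet> snd p = 0" using e p by simp
          qed
        next
          case False
          then obtain y0 where "d \<bullet> y0 = 0" "b \<bullet> y0 \<noteq> 0" by blast
          then show False using use_AB[OF AE d] by blast
        qed
      qed
    qed
  next
    case c: True
    show False
    proof (cases "a = 0")
      case a: True
      show False
      proof (rule inv_sd2[OF AE, where \<beta>="-1" and \<alpha>=0 and yv=0])
        fix t :: real assume "t \<noteq> 0"
        show "Phi a c b d (t, (0*t^2) *\<^sub>R 0) = Phi a c b d (-1*t, (0*t^2) *\<^sub>R 0)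
              \<and> singd (Phi' a c b d (t, (0*t^2) *\<^sub>R 0))"
          unfolding Phi_def singd_Phi using a c by simp
      qed simp
    next
      case a: False
      show False
      proof (cases "d = 0")
        case d: True
        show False
        proof (rule inv_sym[OF AE])
          fix x y show "Phi a c b d (x, y) = Phi a c b d (-x, y)" unfolding Phi_def using c d by simp
        qed
      next
        case d: False
        show False
        proof (cases "\<forall>y. d \<bullet> y = 0 \<longrightarrow> b \<bullet> y = 0")
          case True
          show False
          proof (rule use_A[OF AE d])
            fix p assume "singd (Phi' a c b d p)"
            then obtain x y where p: "p = (x, y)" and e: "4*a*x^3 + 2*x*(b \<bullet> y) = 0" "3*c*x^2 + d \<bullet> y = 0"
              using sPhi by (cases p) blast
            have m: "d \<bullet> y = 0" using e(2) c by simp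
            then have "b \<bullet> y = 0" using True by blast
            then have "x = 0" using e(1) a by simp
            then show "fst p = 0 \<and> d \<bullet> snd p = 0" using m p by simp
          qed
        next
          case False
          then obtain y1 where y1: "d \<bullet> y1 = 0" "b \<bullet> y1 \<noteq> 0" by blast
          define y0 where "y0 = y1 /\<^sub>R (b \<bullet> y1)"
          have y0: "d \<bullet> y0 = 0" "b \<bullet> y0 = 1" unfolding y0_def using y1 by (simp_all add: inner_scaleR_right)
          show False
          proof (rule inv_sd2[OF AE, where \<beta>="-1" and \<alpha>="-2*a" and yv=y0])
            fix t :: real assume "t \<noteq> 0"
            show "Phi a c b d (t, (-2*a*t^2) *\<^sub>R y0) = Phi a c b d (-1*t, (-2*a*t^2) *\<^sub>R y0)
              \<and> singd (Phi' a c b d (t, (-2*a*t^2) *\<^sub>R y0))"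
              unfolding Phi_def singd_Phi using c y0
              by (simp add: inner_scaleR_right algebra_simps eval_nat_numeral)
          qed simp
        qed
      qed
    qed
  qed
qed



lemma lin_smooth:
  fixes L :: "'a::euclidean_space \<Rightarrow> 'b::euclidean_space"
  assumes "linear L" shows "smooth_on U L"
proof -
  have bl: "bounded_linear L" using assms linear_conv_bounded_linear by blast
  define D :: "nat \<Rightarrow> 'a \<Rightarrow> 'a list \<Rightarrow> 'b" where
    "D k x vs = (if k = 0 then L x else if k = 1 then L (hd vs) else 0)" for k x vs
  have "((\<lambda>y. D k y vs) has_derivative (\<lambda>v. D (Suc k) x (v # vs))) (at x)" for k vs x
  proof (cases "k = 0")
    case True
    then show ?thesis unfolding D_def using bl by (simp add: bounded_linear.has_derivative[OF bl has_derivative_ident])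
  next
    case False
    then show ?thesis unfolding D_def by (simp add: has_derivative_const)
  qed
  then show ?thesis unfolding smooth_on_def by (intro exI[of _ D]) (simp add: D_def)
qed

lemma lin_diffeo:
  fixes L :: "'a::euclidean_space \<Rightarrow> 'a"
  assumes "linear L" "linear L'" "\<And>x. L' (L x) = x" "\<And>y. L (L' y) = y"
  shows "diffeo_germ L"
  unfolding diffeo_germ_def
proof (intro conjI exI[of _ UNIV] exI[of _ L'])
  show "L 0 = 0" using assms(1) by (rule linear_0)
  show "L ` UNIV = UNIV" using assms(4) by (metis surj_def)
qed (use assms lin_smooth in auto)

lemma sufficiency:
  fixes i0 :: "'n::finite" and b d :: "real^'n"
  assumes pr: "\<forall>i. 2*a*d$i = 3*b$i*c" and nz: "\<exists>i. a*b$i*c*d$i \<noteq> 0"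
  shows "A_equivalent (Phi a c b d) (G i0)"
proof -
  obtain j where j: "a*b$j*c*d$j \<noteq> 0" using nz by blast
  have a: "a \<noteq> 0" and c: "c \<noteq> 0" and bj: "b$j \<noteq> 0" using j by auto
  have dpr: "d \<bullet> y = (3*c/(2*a)) * (b \<bullet> y)" for y
  proof -
    have "d = (3*c/(2*a)) *\<^sub>R b" using pr a by (simp add: vec_eq_iff field_simps)
    then show ?thesis by simp
  qed
  define T :: "real^'n \<Rightarrow> real^'n" where
    "T y = (\<chi> i. if i = i0 then (3/a) * (b \<bullet> y) else if i = j then y $ i0 else y $ i)" for y
  have linT: "linear T"
    by (rule linearI) (simp_all add: T_def vec_eq_iff inner_add_right algebra_simps)
  have injT: "inj T"
    unfolding linear_injective_0[OF linT]
  proof (intro allI impI)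
    fix y assume y: "T y = 0"
    have yi: "y $ i = 0" if "i \<noteq> j" for i
    proof (cases "i = i0")
      case True
      have "T y $ j = 0" using y by simp
      then show ?thesis using True that unfolding T_def by (simp split: if_splits)
    next
      case False
      have "T y $ i = 0" using y by simp
      then show ?thesis using False that unfolding T_def by simp
    qed
    have ya: "y = axis j (y $ j)" using yi by (simp add: vec_eq_iff axis_def)
    have "T y $ i0 = 0" using y by simp
    then have "(3/a) * (b \<bullet> y) = 0" unfolding T_def by simp
    then have "b \<bullet> y = 0" using a by simp
    then have "b $ j * y $ j = 0" using ya by (metis inner_axis inner_real_def)
    then have "y $ j = 0" using bj by simp
    then show "y = 0" using ya by simp
  qed
  obtain Ti where linTi: "linear Ti" and Ti1: "\<forall>x. Ti (T x) = x" and Ti2: "\<forall>x. T (Ti x) = x"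
    using linear_injective_isomorphism[OF linT injT] by blast
  define hs :: "real \<times> (real^'n) \<Rightarrow> real \<times> (real^'n)" where "hs p = (fst p, T (snd p))" for p
  define hs' :: "real \<times> (real^'n) \<Rightarrow> real \<times> (real^'n)" where "hs' p = (fst p, Ti (snd p))" for p
  define ht :: "real \<times> real \<times> (real^'n) \<Rightarrow> real \<times> real \<times> (real^'n)" where
    "ht z = ((a/3) * fst z, (-c/4) * fst (snd z), Ti (snd (snd z)))" for z
  define ht' :: "real \<times> real \<times> (real^'n) \<Rightarrow> real \<times> real \<times> (real^'n)" where
    "ht' z = ((3/a) * fst z, (-4/c) * fst (snd z), T (snd (snd z)))" for z
  have "diffeo_germ hs"
  proof (rule lin_diffeo[where L'=hs'])
    show "linear hs" unfolding hs_def
      by (rule linearI) (simp_all add: linear_add[OF linT] linear_cmul[OF linT])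
    show "linear hs'" unfolding hs'_def
      by (rule linearI) (simp_all add: linear_add[OF linTi] linear_cmul[OF linTi])
  qed (simp_all add: hs_def hs'_def Ti1 Ti2)
  moreover have "diffeo_germ ht"
  proof (rule lin_diffeo[where L'=ht'])
    show "linear ht" unfolding ht_def
      by (rule linearI) (simp_all add: linear_add[OF linTi] linear_cmul[OF linTi] algebra_simps)
    show "linear ht'" unfolding ht'_def
      by (rule linearI) (simp_all add: linear_add[OF linT] linear_cmul[OF linT] algebra_simps add_divide_distrib)
  qed (simp_all add: ht_def ht'_def Ti1 Ti2 a c)
  moreover have "Phi a c b d p = ht (G i0 (hs p))" for p
  proof -
    obtain x y where p: "p = (x, y)" by (cases p)
    have Ty: "T y $ i0 = (3/a) * (b \<bullet> y)" unfolding T_def by simp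
    show ?thesis unfolding p G_def Phi_def hs_def ht_def inner_axis1 fst_conv snd_conv Ty dpr[of y]
      using Ti1 a c by (simp add: field_simps)
  qed
  ultimately show ?thesis unfolding A_equivalent_def by (intro exI[of _ hs] exI[of _ ht]) auto
qed


theorem proposition6:
  fixes a c :: real and b d :: "real ^ 'n" and i0 :: 'n
  shows "A_equivalent
           (\<lambda>(x::real, y::real ^ 'n).
              (a * x ^ 4 + x ^ 2 * (\<Sum>i\<in>UNIV. b $ i * y $ i),
               c * x ^ 3 + x * (\<Sum>i\<in>UNIV. d $ i * y $ i), y))
           (\<lambda>(x::real, y::real ^ 'n).
              (3 * x ^ 4 + x ^ 2 * y $ i0, - 4 * x ^ 3 - 2 * x * y $ i0, y))
         \<longleftrightarrow> (\<forall>i. 2 * a * d $ i = 3 * b $ i * c) \<and> (\<exists>i. a * b $ i * c * d $ i \<noteq> 0)"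
proof -
  have f: "(\<lambda>(x::real, y::real ^ 'n).
              (a * x ^ 4 + x ^ 2 * (\<Sum>i\<in>UNIV. b $ i * y $ i),
               c * x ^ 3 + x * (\<Sum>i\<in>UNIV. d $ i * y $ i), y)) = Phi a c b d"
    by (rule ext) (auto simp: Phi_def inner_vec_def)
  have g: "(\<lambda>(x::real, y::real ^ 'n).
              (3 * x ^ 4 + x ^ 2 * y $ i0, - 4 * x ^ 3 - 2 * x * y $ i0, y)) = G i0"
    by (rule ext) (auto simp: G_def Phi_def inner_axis1)
  show ?thesis unfolding f g using necessity sufficiency by blast
qed

end
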